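(* Let $P\subseteq S_n$ be a permutation array with ${\rm hd}(P)=d$ and $|P^{\sf CT}|\ge 2$. Then ${\rm hd}(P^{\sf CT})>{\rm hd}(P)$ if and only if both of the following hold: (1) any $\sigma,\tau\in P$ with ${\rm hd}(\sigma,\tau)=d$ satisfy $\sigma^{\sf CT}=\tau^{\sf CT}$; and (2) any $\sigma,\tau\in P$ with ${\rm hd}(\sigma,\tau)>d$ satisfy ${\rm hd}(\sigma^{\sf CT},\tau^{\sf CT})>d$ or $\sigma^{\sf CT}=\tau^{\sf CT}$.
   Context: $S_n$ is the symmetric group on $\{0,1,\ldots,n-1\}$. A permutation array is a non-empty subset $P\subseteq S_n$. ${\rm hd}(\sigma,\tau)=|\{x:\sigma(x)\neq\tau(x)\}|$ and ${\rm hd}(P)=\min\{{\rm hd}(\sigma,\tau):\sigma,\tau\in P,\ \sigma\neq\tau\}$. The contraction of $\sigma\in S_n$ is $\sigma^{\sf CT}\in S_{n-1}$ (on $\{0,\ldots,n-2\}$) defined by $\sigma^{\sf CT}(x)=\sigma(n-1)$ if $x=\sigma^{-1}(n-1)$ and $\sigma^{\sf CT}(x)=\sigma(x)$ otherwise (i.e. delete $n-1$ from the cycle notation of $\sigma$); $P^{\sf CT}=\{\sigma^{\sf CT}:\sigma\in P\}$. *)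

theory Defs
  imports "HOL-Combinatorics.Permutations"
begin

definition Sym :: "nat \<Rightarrow> (nat \<Rightarrow> nat) set" where
  "Sym n = {p. p permutes {..<n}}"

definition hdist :: "nat \<Rightarrow> (nat \<Rightarrow> nat) \<Rightarrow> (nat \<Rightarrow> nat) \<Rightarrow> nat" where
  "hdist n s t = card {x \<in> {..<n}. s x \<noteq> t x}"

definition hd_arr :: "nat \<Rightarrow> (nat \<Rightarrow> nat) set \<Rightarrow> nat" where
  "hd_arr n P = Min {hdist n s t | s t. s \<in> P \<and> t \<in> P \<and> s \<noteq> t}"

text \<open>Contraction of s in S_n to S_(n-1): delete n-1 from the cycle notation.\<close>
definition contr :: "nat \<Rightarrow> (nat \<Rightarrow> nat) \<Rightarrow> (nat \<Rightarrow> nat)" where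
  "contr n s = (\<lambda>x. if x < n - 1 then (if s x = n - 1 then s (n - 1) else s x) else x)"

definition contr_arr :: "nat \<Rightarrow> (nat \<Rightarrow> nat) set \<Rightarrow> (nat \<Rightarrow> nat) set" where
  "contr_arr n P = contr n ` P"

end

theory Submission
  imports Defs
begin

lemma hdist_le_n: "hdist n s t \<le> n"
  unfolding hdist_def by (metis (no_types, lifting) card_lessThan card_mono finite_lessThan mem_Collect_eq subsetI)

lemma contr_hdist_le:
  assumes s: "s permutes {..<n}" and t: "t permutes {..<n}"
  shows "hdist (n - 1) (contr n s) (contr n t) \<le> hdist n s t"
proof -
  define D where "D = {x \<in> {..<n}. s x \<noteq> t x}"
  define D' where "D' = {x \<in> {..<n-1}. contr n s x \<noteq> contr n t x}"
  have fD: "finite D" unfolding D_def by simp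
  show ?thesis
  proof (cases "\<exists>x0. x0 < n - 1 \<and> contr n s x0 \<noteq> contr n t x0 \<and> s x0 = t x0")
    case False
    have "D' \<subseteq> D" unfolding D'_def D_def using False by auto
    then show ?thesis unfolding hdist_def D_def[symmetric] D'_def[symmetric]
      using fD card_mono by blast
  next
    case True
    then obtain x0 where x0: "x0 < n - 1" "contr n s x0 \<noteq> contr n t x0" "s x0 = t x0" by blast
    have sx0: "s x0 = n - 1" using x0 unfolding contr_def by (auto split: if_splits)
    have "s (n-1) \<noteq> t (n-1)" using x0 sx0 unfolding contr_def by (auto split: if_splits)
    hence nD: "n - 1 \<in> D" unfolding D_def using x0 by auto
    have injs: "inj s" using s permutes_inj by blast
    have sub: "D' \<subseteq> insert x0 (D - {n-1})"
    proof
      fix x assume x: "x \<in> D'"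
      show "x \<in> insert x0 (D - {n-1})"
      proof (cases "s x = t x")
        case True
        have "s x = n - 1" using x True unfolding D'_def contr_def by (auto split: if_splits)
        hence "x = x0" using sx0 injs by (metis injD)
        thus ?thesis by simp
      next
        case False
        thus ?thesis using x unfolding D'_def D_def by auto
      qed
    qed
    have "card D' \<le> card (insert x0 (D - {n-1}))" using sub fD card_mono by (metis finite_Diff finite_insert)
    also have "\<dots> \<le> Suc (card (D - {n-1}))" by (simp add: card_insert_le_m1)
    also have "\<dots> = card D" using nD fD by (metis card_Suc_Diff1)
    finally show ?thesis unfolding hdist_def D_def[symmetric] D'_def[symmetric] .
  qed
qed

theorem theorem3p3:
  fixes n d :: nat and P :: "(nat \<Rightarrow> nat) set"
  assumes "P \<noteq> {}" and "P \<subseteq> Sym n"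
    and "hd_arr n P = d"
    and "card (contr_arr n P) \<ge> 2"
  shows "hd_arr (n - 1) (contr_arr n P) > hd_arr n P \<longleftrightarrow>
         ((\<forall>s\<in>P. \<forall>t\<in>P. hdist n s t = d \<longrightarrow> contr n s = contr n t) \<and>
          (\<forall>s\<in>P. \<forall>t\<in>P. hdist n s t > d \<longrightarrow>
              hdist (n - 1) (contr n s) (contr n t) > d \<or> contr n s = contr n t))"
proof -
  define S where "S = {hdist n s t | s t. s \<in> P \<and> t \<in> P \<and> s \<noteq> t}"
  define S' where "S' = {hdist (n-1) s t | s t. s \<in> contr_arr n P \<and> t \<in> contr_arr n P \<and> s \<noteq> t}"
  have fS: "finite S" unfolding S_def
    by (rule finite_subset[of _ "{..n}"]) (auto simp: hdist_le_n)
  have fS': "finite S'" unfolding S'_def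
    by (rule finite_subset[of _ "{..n-1}"]) (auto simp: hdist_le_n)
  have dmin: "d \<le> hdist n s t" if "s \<in> P" "t \<in> P" "s \<noteq> t" for s t
  proof -
    have "hdist n s t \<in> S" unfolding S_def using that by blast
    thus ?thesis using assms(3) fS unfolding hd_arr_def S_def[symmetric] by (metis Min_le)
  qed
  have d'min: "hd_arr (n-1) (contr_arr n P) \<le> hdist (n-1) (contr n s) (contr n t)"
    if "s \<in> P" "t \<in> P" "contr n s \<noteq> contr n t" for s t
  proof -
    have "hdist (n-1) (contr n s) (contr n t) \<in> S'" unfolding S'_def contr_arr_def using that by blast
    thus ?thesis using fS' unfolding hd_arr_def S'_def[symmetric] by simp
  qed
  have "\<exists>a b. a \<in> contr_arr n P \<and> b \<in> contr_arr n P \<and> a \<noteq> b"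
  proof (rule ccontr)
    assume "\<not> ?thesis"
    hence "\<forall>a\<in>contr_arr n P. \<forall>b\<in>contr_arr n P. a = b" by blast
    hence "card (contr_arr n P) \<le> 1" using card_le_Suc0_iff_eq
      by (metis One_nat_def card.infinite zero_le)
    thus False using assms(4) by simp
  qed
  hence "S' \<noteq> {}" unfolding S'_def by blast
  hence "hd_arr (n-1) (contr_arr n P) \<in> S'" unfolding hd_arr_def S'_def[symmetric] using fS' Min_in by blast
  then obtain s0 t0 where st0: "s0 \<in> P" "t0 \<in> P" "contr n s0 \<noteq> contr n t0"
    "hd_arr (n-1) (contr_arr n P) = hdist (n-1) (contr n s0) (contr n t0)"
    unfolding S'_def contr_arr_def by blast
  have perm: "s permutes {..<n}" if "s \<in> P" for s using that assms(2) unfolding Sym_def by blast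
  show ?thesis
  proof
    assume lt: "hd_arr (n - 1) (contr_arr n P) > hd_arr n P"
    show "(\<forall>s\<in>P. \<forall>t\<in>P. hdist n s t = d \<longrightarrow> contr n s = contr n t) \<and>
          (\<forall>s\<in>P. \<forall>t\<in>P. hdist n s t > d \<longrightarrow>
              hdist (n - 1) (contr n s) (contr n t) > d \<or> contr n s = contr n t)"
    proof (intro conjI ballI impI)
      fix s t assume st: "s \<in> P" "t \<in> P" "hdist n s t = d"
      show "contr n s = contr n t"
      proof (rule ccontr)
        assume ne: "contr n s \<noteq> contr n t"
        have "hd_arr (n-1) (contr_arr n P) \<le> hdist n s t"
          using d'min[OF st(1,2) ne] contr_hdist_le[OF perm[OF st(1)] perm[OF st(2)]] by linarith
        thus False using lt st(3) assms(3) by simp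
      qed
    next
      fix s t assume st: "s \<in> P" "t \<in> P" "hdist n s t > d"
      show "hdist (n - 1) (contr n s) (contr n t) > d \<or> contr n s = contr n t"
        using d'min[OF st(1,2)] lt assms(3) by force
    qed
  next
    assume H: "(\<forall>s\<in>P. \<forall>t\<in>P. hdist n s t = d \<longrightarrow> contr n s = contr n t) \<and>
          (\<forall>s\<in>P. \<forall>t\<in>P. hdist n s t > d \<longrightarrow>
              hdist (n - 1) (contr n s) (contr n t) > d \<or> contr n s = contr n t)"
    have "s0 \<noteq> t0" using st0 by blast
    hence "d \<le> hdist n s0 t0" using dmin st0 by blast
    moreover have "hdist n s0 t0 \<noteq> d" using H st0 by blast
    ultimately have "hdist n s0 t0 > d" by simp
    hence "hdist (n - 1) (contr n s0) (contr n t0) > d" using H st0 by blast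
    thus "hd_arr (n - 1) (contr_arr n P) > hd_arr n P" using st0 assms(3) by simp
  qed
qed

end
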